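(* If a Banach space $X$ has the join-lush property, then $n_L(X)=1$.
   Context: $X$ is a Banach space over $\mathbb{K}=\mathbb{R}$ or $\mathbb{C}$, $\mathbb{T}=\{\alpha\in\mathbb{K}:|\alpha|=1\}$. For $y^*\in S_{X^*}$ and $\varepsilon>0$, $S(y^*,\varepsilon)=\{z\in B_X:\operatorname{Re}y^*(z)>1-\varepsilon\}$. $X$ has the join-lush property if for each $x,y\in S_X$ and $\varepsilon>0$ there exist $y^*\in S_{X^*}$ with $y\in S=S(y^*,\varepsilon)$, $x_1,x_2\in S$, $\lambda\in[0,1]$ and $\alpha_1,\alpha_2\in\mathbb{T}$ such that $\|x-(\lambda\alpha_1x_1+(1-\lambda)\alpha_2x_2)\|<\varepsilon$. $\mathrm{Lip}_0(X)$ is the set of Lipschitz maps $T:X\to X$ with $T(0)=0$, with $\|T\|_L=\sup\{\|Tx-Ty\|/\|x-y\|: x\neq y\}$; $D(x)=\{x^*\in X^*: x^*(x)=\|x^*\|\|x\|=\|x\|^2\}$; $\omega(T)=\sup\{|f(Tx-Ty)|/\|x-y\|^2: x\neq y,\ f\in D(x-y)\}$; $n_L(X)=\inf\{\omega(T): T\in\mathrm{Lip}_0(X),\ \|T\|_L=1\}$. *)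

theory Defs
  imports "HOL-Analysis.Analysis"
begin

text \<open>A Banach space over K = R or C is modelled as a real Banach space type 'a
  together with a scalar set K (either the reals inside the complex numbers, or all of C)
  and a scalar multiplication sm :: complex => 'a => 'a extending the real one.\<close>

definition complex_structure :: "(complex \<Rightarrow> 'a::real_normed_vector \<Rightarrow> 'a) \<Rightarrow> bool" where
  "complex_structure sm \<longleftrightarrow>
     (\<forall>r x. sm (complex_of_real r) x = r *\<^sub>R x) \<and>
     (\<forall>a b x. sm (a + b) x = sm a x + sm b x) \<and>
     (\<forall>a x y. sm a (x + y) = sm a x + sm a y) \<and>
     (\<forall>a b x. sm (a * b) x = sm a (sm b x)) \<and>
     (\<forall>a x. norm (sm a x) = cmod a * norm x)"

definition scalar_setting :: "complex set \<Rightarrow> (complex \<Rightarrow> 'a::real_normed_vector \<Rightarrow> 'a) \<Rightarrow> bool" where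
  "scalar_setting K sm \<longleftrightarrow>
     (K = \<real> \<and> (\<forall>c x. sm c x = Re c *\<^sub>R x)) \<or> (K = UNIV \<and> complex_structure sm)"

definition dual :: "complex set \<Rightarrow> (complex \<Rightarrow> 'a::real_normed_vector \<Rightarrow> 'a) \<Rightarrow> ('a \<Rightarrow> complex) set" where
  "dual K sm = {f. bounded_linear f \<and> (\<forall>x. f x \<in> K) \<and> (\<forall>c\<in>K. \<forall>x. f (sm c x) = c * f x)}"

definition unimod :: "complex set \<Rightarrow> complex set" where
  "unimod K = {a \<in> K. cmod a = 1}"

definition slice :: "('a::real_normed_vector \<Rightarrow> complex) \<Rightarrow> real \<Rightarrow> 'a set" where
  "slice ys \<epsilon> = {z. norm z \<le> 1 \<and> Re (ys z) > 1 - \<epsilon>}"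

definition join_lush :: "complex set \<Rightarrow> (complex \<Rightarrow> 'a::real_normed_vector \<Rightarrow> 'a) \<Rightarrow> bool" where
  "join_lush K sm \<longleftrightarrow>
    (\<forall>x y. norm x = 1 \<longrightarrow> norm y = 1 \<longrightarrow> (\<forall>\<epsilon>>0.
       \<exists>ys\<in>dual K sm. onorm ys = 1 \<and> y \<in> slice ys \<epsilon> \<and>
         (\<exists>x1\<in>slice ys \<epsilon>. \<exists>x2\<in>slice ys \<epsilon>. \<exists>t\<in>{0..1::real}.
            \<exists>a1\<in>unimod K. \<exists>a2\<in>unimod K.
              norm (x - (t *\<^sub>R sm a1 x1 + (1 - t) *\<^sub>R sm a2 x2)) < \<epsilon>)))"

definition Lip0 :: "('a::real_normed_vector \<Rightarrow> 'a) set" where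
  "Lip0 = {T. T 0 = 0 \<and> (\<exists>C. lipschitz_on C UNIV T)}"

definition lip_norm :: "('a::real_normed_vector \<Rightarrow> 'a) \<Rightarrow> real" where
  "lip_norm T = Sup {norm (T x - T y) / norm (x - y) | x y. x \<noteq> y}"

definition Dset :: "complex set \<Rightarrow> (complex \<Rightarrow> 'a::real_normed_vector \<Rightarrow> 'a) \<Rightarrow> 'a \<Rightarrow> ('a \<Rightarrow> complex) set" where
  "Dset K sm x = {f \<in> dual K sm. f x = complex_of_real (onorm f * norm x)
                                 \<and> onorm f * norm x = (norm x)\<^sup>2}"

definition omega :: "complex set \<Rightarrow> (complex \<Rightarrow> 'a::real_normed_vector \<Rightarrow> 'a) \<Rightarrow> ('a \<Rightarrow> 'a) \<Rightarrow> real" where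
  "omega K sm T = Sup {cmod (f (T x - T y)) / (norm (x - y))\<^sup>2 | x y f. x \<noteq> y \<and> f \<in> Dset K sm (x - y)}"

definition nL :: "complex set \<Rightarrow> (complex \<Rightarrow> 'a::real_normed_vector \<Rightarrow> 'a) \<Rightarrow> real" where
  "nL K sm = Inf {omega K sm T | T. T \<in> Lip0 \<and> lip_norm T = 1}"

end

theory Submission
  imports Defs
begin


definition sublin :: "('a::real_vector \<Rightarrow> real) \<Rightarrow> bool" where
  "sublin p \<longleftrightarrow> (\<forall>x y. p (x + y) \<le> p x + p y) \<and> (\<forall>c x. 0 \<le> c \<longrightarrow> p (c *\<^sub>R x) = c * p x)"

definition hbgood :: "('a::real_vector \<Rightarrow> real) \<Rightarrow> ('a \<times> real) set \<Rightarrow> bool" where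
  "hbgood p G \<longleftrightarrow> (\<forall>x a b. (x,a) \<in> G \<longrightarrow> (x,b) \<in> G \<longrightarrow> a = b)
     \<and> (\<forall>x a y b. (x,a) \<in> G \<longrightarrow> (y,b) \<in> G \<longrightarrow> (x+y, a+b) \<in> G)
     \<and> (\<forall>x a c. (x,a) \<in> G \<longrightarrow> (c *\<^sub>R x, c*a) \<in> G)
     \<and> (\<forall>x a. (x,a) \<in> G \<longrightarrow> a \<le> p x)"

lemma hb_chain:
  assumes C: "C \<in> chains {G. hbgood p G \<and> G0 \<subseteq> G}" and ne: "C \<noteq> {}"
  shows "hbgood p (\<Union>C) \<and> G0 \<subseteq> \<Union>C"
proof -
  have sub: "C \<subseteq> {G. hbgood p G \<and> G0 \<subseteq> G}" using chainsD2[OF C] .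
  have key: "\<exists>G\<in>C. P1 \<in> G \<and> P2 \<in> G" if h12: "P1 \<in> \<Union>C" "P2 \<in> \<Union>C" for P1 P2
  proof -
    obtain G1 G2 where "G1 \<in> C" "G2 \<in> C" "P1 \<in> G1" "P2 \<in> G2" using h12 by blast
    then show ?thesis using chainsD[OF C, of G1 G2] by blast
  qed
  have g: "hbgood p G" if "G \<in> C" for G using sub that by blast
  show ?thesis
  proof
    show "hbgood p (\<Union>C)"
      unfolding hbgood_def
    proof (intro conjI allI impI)
      fix x a b assume "(x,a) \<in> \<Union>C" "(x,b) \<in> \<Union>C"
      then obtain G where "G \<in> C" "(x,a) \<in> G" "(x,b) \<in> G" using key by blast
      then show "a = b" using g[of G] unfolding hbgood_def by blast
    next
      fix x a y b assume "(x,a) \<in> \<Union>C" "(y,b) \<in> \<Union>C"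
      then obtain G where "G \<in> C" "(x,a) \<in> G" "(y,b) \<in> G" using key by blast
      then show "(x+y, a+b) \<in> \<Union>C" using g[of G] unfolding hbgood_def by blast
    next
      fix x a c assume "(x,a) \<in> \<Union>C"
      then obtain G where "G \<in> C" "(x,a) \<in> G" by blast
      then show "(c *\<^sub>R x, c*a) \<in> \<Union>C" using g[of G] unfolding hbgood_def by blast
    next
      fix x a assume "(x,a) \<in> \<Union>C"
      then obtain G where "G \<in> C" "(x,a) \<in> G" by blast
      then show "a \<le> p x" using g[of G] unfolding hbgood_def by blast
    qed
    show "G0 \<subseteq> \<Union>C" using sub ne by blast
  qed
qed

lemma hb_extend:
  fixes p :: "'a::real_vector \<Rightarrow> real"
  assumes sp: "sublin p" and gM: "hbgood p M" and ne: "M \<noteq> {}" and x0: "x0 \<notin> fst ` M"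
  shows "\<exists>M'. hbgood p M' \<and> M \<subseteq> M' \<and> M' \<noteq> M"
proof -
  have uniq: "\<And>x a b. (x,a) \<in> M \<Longrightarrow> (x,b) \<in> M \<Longrightarrow> a = b"
   and add: "\<And>x a y b. (x,a) \<in> M \<Longrightarrow> (y,b) \<in> M \<Longrightarrow> (x+y, a+b) \<in> M"
   and smul: "\<And>x a c. (x,a) \<in> M \<Longrightarrow> (c *\<^sub>R x, c*a) \<in> M"
   and dom: "\<And>x a. (x,a) \<in> M \<Longrightarrow> a \<le> p x"
    using gM unfolding hbgood_def by blast+
  have padd: "\<And>x y. p (x + y) \<le> p x + p y" and phom: "\<And>c x. 0 \<le> c \<Longrightarrow> p (c *\<^sub>R x) = c * p x"
    using sp unfolding sublin_def by blast+
  obtain y0 a0 where "(y0, a0) \<in> M" using ne by auto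
  from smul[OF this, of 0] have zero: "(0, 0) \<in> M" by simp
  define L where "L = {a - p (y - x0) | y a. (y,a) \<in> M}"
  define \<xi> where "\<xi> = Sup L"
  have LU: "a - p (y - x0) \<le> p (y' + x0) - a'" if "(y,a) \<in> M" "(y',a') \<in> M" for y a y' a'
  proof -
    have "a + a' \<le> p (y + y')" using dom[OF add[OF that]] .
    also have "\<dots> \<le> p (y - x0) + p (y' + x0)" using padd[of "y - x0" "y' + x0"] by simp
    finally show ?thesis by simp
  qed
  have Lne: "L \<noteq> {}" unfolding L_def using zero by blast
  have Lbdd: "bdd_above L" unfolding L_def bdd_above_def using LU zero by blast
  have xi1: "a - p (y - x0) \<le> \<xi>" if "(y,a) \<in> M" for y a
    unfolding \<xi>_def by (rule cSup_upper[OF _ Lbdd]) (use that L_def in blast)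
  have xi2: "\<xi> \<le> p (y' + x0) - a'" if "(y',a') \<in> M" for y' a'
    unfolding \<xi>_def by (rule cSup_least[OF Lne]) (use that LU L_def in blast)
  define M' where "M' = {(y + t *\<^sub>R x0, a + t * \<xi>) | y a t. (y,a) \<in> M}"
  have inM: "(y, a) \<in> M \<Longrightarrow> (y + t *\<^sub>R x0, a + t * \<xi>) \<in> M'" for y a t
    unfolding M'_def by blast
  have dec: "t = t' \<and> y = y'" if "(y,a) \<in> M" "(y',a') \<in> M" "y + t *\<^sub>R x0 = y' + t' *\<^sub>R x0" for y a y' a' t t'
  proof (cases "t = t'")
    case True then show ?thesis using that by simp
  next
    case False
    have "(y + (-1) *\<^sub>R y', a + (-1) * a') \<in> M" using add[OF that(1) smul[OF that(2)]] .
    then have "((1/(t'-t)) *\<^sub>R (y - y'), (1/(t'-t)) * (a - a')) \<in> M" using smul by fastforce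
    moreover have "(1/(t'-t)) *\<^sub>R (y - y') = x0"
    proof -
      have "y - y' = (t' - t) *\<^sub>R x0" using that(3) by (simp add: algebra_simps)
      then show ?thesis using False by simp
    qed
    ultimately have "x0 \<in> fst ` M" by force
    then show ?thesis using x0 by blast
  qed
  have good: "hbgood p M'"
    unfolding hbgood_def
  proof (intro conjI allI impI)
    fix x a b assume "(x,a) \<in> M'" "(x,b) \<in> M'"
    then obtain y1 a1 t1 y2 a2 t2 where h: "(y1,a1) \<in> M" "(y2,a2) \<in> M" "x = y1 + t1 *\<^sub>R x0"
      "a = a1 + t1 * \<xi>" "x = y2 + t2 *\<^sub>R x0" "b = a2 + t2 * \<xi>" unfolding M'_def by blast
    then have "t1 = t2 \<and> y1 = y2" using dec[of y1 a1 y2 a2 t1 t2] by simp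
    then show "a = b" using h uniq by blast
  next
    fix x a y b assume "(x,a) \<in> M'" "(y,b) \<in> M'"
    then obtain y1 a1 t1 y2 a2 t2 where h: "(y1,a1) \<in> M" "(y2,a2) \<in> M" "x = y1 + t1 *\<^sub>R x0"
      "a = a1 + t1 * \<xi>" "y = y2 + t2 *\<^sub>R x0" "b = a2 + t2 * \<xi>" unfolding M'_def by blast
    have "(y1 + y2 + (t1 + t2) *\<^sub>R x0, a1 + a2 + (t1 + t2) * \<xi>) \<in> M'" using inM[OF add[OF h(1,2)]] .
    then show "(x + y, a + b) \<in> M'" using h by (simp add: algebra_simps)
  next
    fix x a c assume "(x,a) \<in> M'"
    then obtain y1 a1 t1 where h: "(y1,a1) \<in> M" "x = y1 + t1 *\<^sub>R x0" "a = a1 + t1 * \<xi>"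
      unfolding M'_def by blast
    have "(c *\<^sub>R y1 + (c * t1) *\<^sub>R x0, c * a1 + (c * t1) * \<xi>) \<in> M'" using inM[OF smul[OF h(1)]] .
    then show "(c *\<^sub>R x, c * a) \<in> M'" using h by (simp add: algebra_simps)
  next
    fix x a assume "(x,a) \<in> M'"
    then obtain y a1 t where h: "(y,a1) \<in> M" "x = y + t *\<^sub>R x0" "a = a1 + t * \<xi>"
      unfolding M'_def by blast
    show "a \<le> p x"
    proof (cases "t = 0")
      case True then show ?thesis using h dom by simp
    next
      case False
      have m: "((1/t) *\<^sub>R y, (1/t) * a1) \<in> M" using smul[OF h(1)] .
      show ?thesis
      proof (cases "t > 0")
        case True
        have "\<xi> \<le> p ((1/t) *\<^sub>R y + x0) - (1/t) * a1" using xi2[OF m] .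
        then have "t * \<xi> \<le> t * p ((1/t) *\<^sub>R y + x0) - a1" using True
          using mult_left_mono[OF \<open>\<xi> \<le> _\<close>, of t] by (simp add: right_diff_distrib)
        also have "t * p ((1/t) *\<^sub>R y + x0) = p (t *\<^sub>R ((1/t) *\<^sub>R y + x0))"
          using phom[of t] True by simp
        also have "t *\<^sub>R ((1/t) *\<^sub>R y + x0) = x" using h True by (simp add: algebra_simps)
        finally show ?thesis using h by simp
      next
        case False
        then have tn: "t < 0" using \<open>t \<noteq> 0\<close> by simp
        define s where "s = -t"
        have sp0: "s > 0" using tn s_def by simp
        have m2: "((1/s) *\<^sub>R y, (1/s) * a1) \<in> M" using smul[OF h(1)] .
        have "(1/s) * a1 - p ((1/s) *\<^sub>R y - x0) \<le> \<xi>" using xi1[OF m2] .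
        then have "s * ((1/s) * a1 - p ((1/s) *\<^sub>R y - x0)) \<le> s * \<xi>" using sp0 by (simp add: mult_left_mono)
        then have "a1 - s * p ((1/s) *\<^sub>R y - x0) \<le> s * \<xi>" using sp0 by (simp add: algebra_simps)
        also have "s * p ((1/s) *\<^sub>R y - x0) = p (s *\<^sub>R ((1/s) *\<^sub>R y - x0))" using phom[of s] sp0 by simp
        also have "s *\<^sub>R ((1/s) *\<^sub>R y - x0) = x" using h sp0 s_def by (simp add: algebra_simps)
        finally show ?thesis using h s_def by simp
      qed
    qed
  qed
  have "M \<subseteq> M'" using inM[of _ _ 0] by auto
  moreover have "M' \<noteq> M"
  proof
    assume "M' = M"
    have "(0 + 1 *\<^sub>R x0, 0 + 1 * \<xi>) \<in> M'" using inM[OF zero] .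
    then have "(x0, \<xi>) \<in> M" using \<open>M' = M\<close> by simp
    then show False using x0 by force
  qed
  ultimately show ?thesis using good by blast
qed

lemma hahn_banach:
  fixes p :: "'a::real_vector \<Rightarrow> real"
  assumes sp: "sublin p" and g0: "hbgood p G0" and ne: "G0 \<noteq> {}"
  shows "\<exists>g. linear g \<and> (\<forall>x. g x \<le> p x) \<and> (\<forall>x a. (x,a) \<in> G0 \<longrightarrow> g x = a)"
proof -
  define A where "A = {G. hbgood p G \<and> G0 \<subseteq> G}"
  have "\<forall>C\<in>chains A. \<exists>U\<in>A. \<forall>X\<in>C. X \<subseteq> U"
  proof
    fix C assume C: "C \<in> chains A"
    show "\<exists>U\<in>A. \<forall>X\<in>C. X \<subseteq> U"
    proof (cases "C = {}")
      case True then show ?thesis using g0 A_def by auto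
    next
      case False
      then have "\<Union>C \<in> A" using hb_chain[of C p G0] C A_def by blast
      then show ?thesis by blast
    qed
  qed
  from Zorn_Lemma2[OF this] obtain M where M: "M \<in> A" and max: "\<forall>X\<in>A. M \<subseteq> X \<longrightarrow> X = M" by blast
  have gM: "hbgood p M" and sub: "G0 \<subseteq> M" using M A_def by auto
  have full: "x \<in> fst ` M" for x
  proof (rule ccontr)
    assume "x \<notin> fst ` M"
    from hb_extend[OF sp gM _ this] obtain M' where "hbgood p M'" "M \<subseteq> M'" "M' \<noteq> M"
      using ne sub by blast
    then show False using max sub A_def by blast
  qed
  have uniq: "\<And>x a b. (x,a) \<in> M \<Longrightarrow> (x,b) \<in> M \<Longrightarrow> a = b"
   and add: "\<And>x a y b. (x,a) \<in> M \<Longrightarrow> (y,b) \<in> M \<Longrightarrow> (x+y, a+b) \<in> M"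
   and smul: "\<And>x a c. (x,a) \<in> M \<Longrightarrow> (c *\<^sub>R x, c*a) \<in> M"
   and dom: "\<And>x a. (x,a) \<in> M \<Longrightarrow> a \<le> p x"
    using gM unfolding hbgood_def by blast+
  define g where "g x = (THE a. (x,a) \<in> M)" for x
  have gin: "(x, g x) \<in> M" for x
  proof -
    obtain a where a: "(x,a) \<in> M" using full[of x] by force
    have "(THE a. (x,a) \<in> M) = a" using a uniq by blast
    then show ?thesis using a g_def by simp
  qed
  have geq: "(x,a) \<in> M \<Longrightarrow> g x = a" for x a using gin uniq by blast
  have "linear g"
  proof (rule linearI)
    fix x y show "g (x + y) = g x + g y" using geq[OF add[OF gin gin]] .
  next
    fix c x show "g (c *\<^sub>R x) = c *\<^sub>R g x" using geq[OF smul[OF gin]] by simp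
  qed
  moreover have "\<forall>x. g x \<le> p x" using dom gin by blast
  moreover have "\<forall>x a. (x,a) \<in> G0 \<longrightarrow> g x = a" using geq sub by blast
  ultimately show ?thesis by blast
qed



lemma bp_point:
  fixes f :: "'a::banach \<Rightarrow> real"
  assumes lin: "linear f" and fb: "\<And>y. \<bar>f y\<bar> \<le> norm y" and k: "k > 0" and x: "norm x \<le> 1"
  shows "\<exists>z0. norm z0 \<le> 1 \<and> norm (z0 - x) \<le> k * f (z0 - x) \<and>
     (\<forall>w. norm w \<le> k * f w \<longrightarrow> norm (z0 + w) \<le> 1 \<longrightarrow> w = 0)"
proof -
  define Kc where "Kc = {w. norm w \<le> k * f w}"
  have fadd: "f (a + b) = f a + f b" for a b using linear_add[OF lin] .
  have fdiff: "f (a - b) = f a - f b" for a b using linear_diff[OF lin] .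
  have f0: "f 0 = 0" using linear_0[OF lin] .
  have Kadd: "a + b \<in> Kc" if "a \<in> Kc" "b \<in> Kc" for a b
  proof -
    have "norm (a + b) \<le> norm a + norm b" by (rule norm_triangle_ineq)
    also have "\<dots> \<le> k * f a + k * f b" using that Kc_def by auto
    finally show ?thesis using Kc_def fadd by (simp add: algebra_simps)
  qed
  have K0: "0 \<in> Kc" using Kc_def f0 by simp
  define C where "C u = {z. norm z \<le> 1 \<and> z - u \<in> Kc}" for u
  have uC: "norm u \<le> 1 \<Longrightarrow> u \<in> C u" for u using K0 C_def by simp
  have fC: "z \<in> C u \<Longrightarrow> f z \<le> 1" for z u using fb[of z] C_def by force
  have bddC: "bdd_above (f ` C u)" for u by (rule bdd_aboveI2[where M=1]) (rule fC)
  define S where "S u = Sup (f ` C u)" for u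
  have SC: "z \<in> C u \<Longrightarrow> f z \<le> S u" for z u unfolding S_def by (rule cSup_upper[OF _ bddC]) simp
  have ex: "\<exists>v. v \<in> C u \<and> S u - (1/2)^n \<le> f v" if nu: "norm u \<le> 1" for u and n :: nat
  proof -
    have "S u - (1/2)^n < S u" by simp
    then obtain fv where "fv \<in> f ` C u" "S u - (1/2)^n < fv"
      using less_cSupD[of "f ` C u"] uC[OF nu] unfolding S_def by blast
    then show ?thesis by force
  qed
  define nxt where "nxt u n = (SOME v. v \<in> C u \<and> S u - (1/2)^n \<le> f v)" for u and n :: nat
  have nxt: "nxt u n \<in> C u \<and> S u - (1/2)^n \<le> f (nxt u n)" if "norm u \<le> 1" for u n
    unfolding nxt_def using someI_ex[OF ex[OF that]] .
  define xs where "xs = rec_nat x (\<lambda>n u. nxt u n)"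
  have xs0: "xs 0 = x" and xsS: "xs (Suc n) = nxt (xs n) n" for n unfolding xs_def by simp_all
  have nb: "norm (xs n) \<le> 1" for n
  proof (induction n)
    case 0 then show ?case using x xs0 by simp
  next
    case (Suc n) then show ?case using nxt[OF Suc] xsS C_def by simp
  qed
  have xsC: "xs (Suc n) \<in> C (xs n)" and xsS2: "S (xs n) - (1/2)^n \<le> f (xs (Suc n))" for n
    using nxt[OF nb[of n]] xsS by simp_all
  have nest1: "C (xs (Suc n)) \<subseteq> C (xs n)" for n
  proof
    fix z assume "z \<in> C (xs (Suc n))"
    then have "norm z \<le> 1" "z - xs (Suc n) \<in> Kc" using C_def by auto
    moreover have "xs (Suc n) - xs n \<in> Kc" using xsC[of n] C_def by auto
    ultimately show "z \<in> C (xs n)" using Kadd[of "z - xs (Suc n)" "xs (Suc n) - xs n"] C_def by simp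
  qed
  have nest: "n \<le> m \<Longrightarrow> C (xs m) \<subseteq> C (xs n)" for n m
    using lift_Suc_antimono_le[of "\<lambda>n. C (xs n)", OF nest1] by blast
  have diam: "norm (z - xs (Suc n)) \<le> k * (1/2)^n" if "z \<in> C (xs (Suc n))" for z n
  proof -
    have "norm (z - xs (Suc n)) \<le> k * f (z - xs (Suc n))" using that C_def Kc_def by auto
    also have "\<dots> = k * (f z - f (xs (Suc n)))" using fdiff by simp
    also have "\<dots> \<le> k * (1/2)^n"
    proof -
      have "z \<in> C (xs n)" using nest1 that by blast
      then have "f z \<le> S (xs n)" using SC by blast
      then have "f z - f (xs (Suc n)) \<le> (1/2)^n" using xsS2[of n] by simp
      then show ?thesis using k by simp
    qed
    finally show ?thesis .
  qed
  have inC: "xs m \<in> C (xs n)" if "n \<le> m" for m n using nest[OF that] uC[OF nb[of m]] by blast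
  have dist_bd: "dist (xs m) (xs (Suc n)) \<le> k * (1/2)^n" if "Suc n \<le> m" for m n
    using diam[OF inC[OF that]] by (simp add: dist_norm)
  have "Cauchy xs"
  proof (rule metric_CauchyI)
    fix e :: real assume e: "e > 0"
    obtain N where N: "(1/2::real)^N < e / (2*k)" using real_arch_pow_inv[of "e/(2*k)" "1/2::real"] e k by auto
    have "k * (1/2)^N < e/2" using N k by (simp add: field_simps)
    show "\<exists>M. \<forall>m\<ge>M. \<forall>n\<ge>M. dist (xs m) (xs n) < e"
    proof (intro exI allI impI)
      fix m n assume "Suc N \<le> m" "Suc N \<le> n"
      have "dist (xs m) (xs n) \<le> dist (xs m) (xs (Suc N)) + dist (xs n) (xs (Suc N))" by (rule dist_triangle2)
      also have "\<dots> \<le> k * (1/2)^N + k * (1/2)^N" using dist_bd \<open>Suc N \<le> m\<close> \<open>Suc N \<le> n\<close> by (meson add_mono)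
      finally show "dist (xs m) (xs n) < e" using \<open>k * (1/2)^N < e/2\<close> by simp
    qed
  qed
  then obtain z0 where lim: "xs \<longlonglongrightarrow> z0" using Cauchy_convergent_iff convergent_def by blast
  have bl: "bounded_linear f"
    by (rule bounded_linear_intro[where K=1]) (auto simp: linear_add[OF lin] linear_scale[OF lin] fb)
  then have contf: "continuous_on UNIV f" using linear_continuous_on by blast
  have closedC: "closed (C u)" for u
  proof -
    have "C u = {z. norm z \<le> 1} \<inter> {z. norm (z - u) \<le> k * f (z - u)}" unfolding C_def Kc_def by auto
    moreover have "closed {z. norm (z - u) \<le> k * f (z - u)}"
      by (intro closed_Collect_le continuous_intros continuous_on_compose2[OF contf]) auto
    moreover have "closed {z. norm z \<le> (1::real)}" by (intro closed_Collect_le continuous_intros)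
    ultimately show ?thesis by auto
  qed
  have z0C: "z0 \<in> C (xs n)" for n
  proof -
    have "(\<lambda>m. xs (m + n)) \<longlonglongrightarrow> z0" using LIMSEQ_ignore_initial_segment[OF lim] .
    moreover have "\<forall>m. xs (m + n) \<in> C (xs n)" using inC by simp
    ultimately show ?thesis using closed_sequentially[OF closedC[of "xs n"], of "\<lambda>m. xs (m + n)" z0] by blast
  qed
  have r1: "norm z0 \<le> 1" and r2: "norm (z0 - x) \<le> k * f (z0 - x)"
    using z0C[of 0] xs0 C_def Kc_def by auto
  have r3: "w = 0" if w: "norm w \<le> k * f w" "norm (z0 + w) \<le> 1" for w
  proof (rule ccontr)
    assume "w \<noteq> 0"
    then have nw: "norm w > 0" by simp
    obtain N where N: "(1/2::real)^N < norm w / (2*k)" using real_arch_pow_inv[of "norm w/(2*k)" "1/2::real"] nw k by auto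
    have "z0 + w \<in> C (xs N)"
    proof -
      have "z0 - xs N \<in> Kc" using z0C C_def by auto
      then have "(z0 - xs N) + w \<in> Kc" using Kadd w Kc_def by auto
      then show ?thesis using C_def w by (simp add: algebra_simps)
    qed
    have a: "norm (z0 + w - xs (Suc N)) \<le> k * (1/2)^N"
    proof -
      have "z0 - xs (Suc N) \<in> Kc" using z0C C_def by auto
      then have "(z0 - xs (Suc N)) + w \<in> Kc" using Kadd w Kc_def by auto
      then have "z0 + w \<in> C (xs (Suc N))" using C_def w by (simp add: algebra_simps)
      then show ?thesis using diam by blast
    qed
    have b: "norm (z0 - xs (Suc N)) \<le> k * (1/2)^N" using diam z0C by blast
    have "norm w \<le> norm (z0 + w - xs (Suc N)) + norm (z0 - xs (Suc N))"
      using norm_triangle_ineq4[of "z0 + w - xs (Suc N)" "z0 - xs (Suc N)"] by simp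
    also have "\<dots> \<le> 2 * k * (1/2)^N" using a b by simp
    also have "\<dots> < norm w" using N k by (simp add: field_simps)
    finally show False by simp
  qed
  show ?thesis using r1 r2 r3 by blast
qed



lemma bpb_real:
  fixes f :: "'a::banach \<Rightarrow> real"
  assumes lin: "linear f" and fb: "\<And>y. \<bar>f y\<bar> \<le> norm y" and x: "norm x \<le> 1"
    and k: "k \<ge> 4" and eta: "0 < \<eta>" "\<eta> \<le> 1/2" and fx: "f x \<ge> 1 - \<eta>"
  shows "\<exists>g z0. linear g \<and> (\<forall>y. g y \<le> norm y) \<and> g z0 = 1 \<and> norm z0 = 1 \<and>
     norm (z0 - x) \<le> k * \<eta> \<and> (\<forall>y. \<bar>g y - f y\<bar> \<le> (12/(k-2) + 2*\<eta>) * norm y)"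
proof -
  define a where "a = f x"
  have a: "a \<ge> 1/2" "a \<le> 1" using fx eta fb[of x] x unfolding a_def by auto
  have fadd: "f (u + v) = f u + f v" for u v using linear_add[OF lin] .
  have fdiff: "f (u - v) = f u - f v" for u v using linear_diff[OF lin] .
  have fscale: "f (c *\<^sub>R u) = c * f u" for c u using linear_scale[OF lin] by simp
  define Kc where "Kc = {w. norm w \<le> k * f w}"
  have Kadd: "u + v \<in> Kc" if "u \<in> Kc" "v \<in> Kc" for u v
  proof -
    have "norm (u + v) \<le> norm u + norm v" by (rule norm_triangle_ineq)
    also have "\<dots> \<le> k * f u + k * f v" using that Kc_def by auto
    finally show ?thesis using Kc_def fadd by (simp add: algebra_simps)
  qed
  have K0: "0 \<in> Kc" using Kc_def linear_0[OF lin] by simp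
  have Kscale: "c *\<^sub>R u \<in> Kc" if "u \<in> Kc" "c \<ge> 0" for u c
    using that Kc_def fscale mult_left_mono[of "norm u" "k * f u" c] by (auto simp: algebra_simps)
  obtain z0 where z0n: "norm z0 \<le> 1" and z0x: "norm (z0 - x) \<le> k * f (z0 - x)"
    and z0max: "\<And>w. norm w \<le> k * f w \<Longrightarrow> norm (z0 + w) \<le> 1 \<Longrightarrow> w = 0"
    using bp_point[OF lin fb _ x, of k] k by auto
  have xK: "x \<in> Kc"
  proof -
    have "k * a \<ge> 4 * (1/2)" by (rule mult_mono[OF k a(1)]) (use k in auto)
    then show ?thesis using x Kc_def a_def by simp
  qed
  have xne: "x \<noteq> 0" using a a_def linear_0[OF lin] by auto
  have "norm (z0 - x) \<le> k * (f z0 - a)" using z0x fdiff a_def by simp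
  also have "\<dots> \<le> k * \<eta>"
  proof -
    have "f z0 \<le> 1" using fb[of z0] z0n by simp
    then have "f z0 - a \<le> \<eta>" using fx a_def by simp
    then show ?thesis using k by simp
  qed
  finally have z0close: "norm (z0 - x) \<le> k * \<eta>" .
  have z0one: "norm z0 = 1"
  proof (rule ccontr)
    assume "norm z0 \<noteq> 1"
    then have lt: "norm z0 < 1" using z0n by simp
    define w where "w = (1 - norm z0) *\<^sub>R x"
    have "w \<in> Kc" using Kscale[OF xK] lt w_def by simp
    moreover have "norm (z0 + w) \<le> 1"
    proof -
      have "norm (z0 + w) \<le> norm z0 + norm w" by (rule norm_triangle_ineq)
      also have "norm w = (1 - norm z0) * norm x" using lt w_def by simp
      also have "\<dots> \<le> (1 - norm z0) * 1" using lt x by (intro mult_left_mono) auto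
      finally show ?thesis by simp
    qed
    ultimately have "w = 0" using z0max Kc_def by blast
    then show False using lt xne w_def by simp
  qed
  define q where "q y = Inf ((\<lambda>w. norm (y + w)) ` Kc)" for y
  have qbdd: "bdd_below ((\<lambda>w. norm (y + w)) ` Kc)" for y by (rule bdd_belowI2[where m=0]) simp
  have qne: "(\<lambda>w. norm (y + w)) ` Kc \<noteq> {}" for y using K0 by blast
  have qle: "w \<in> Kc \<Longrightarrow> q y \<le> norm (y + w)" for y w
    unfolding q_def by (rule cInf_lower[OF _ qbdd]) simp
  have qge: "(\<And>w. w \<in> Kc \<Longrightarrow> m \<le> norm (y + w)) \<Longrightarrow> m \<le> q y" for m y
    unfolding q_def by (rule cInf_greatest[OF qne]) blast
  have q0: "q y \<ge> 0" for y by (rule qge) simp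
  have qnorm: "q y \<le> norm y" for y using qle[OF K0, of y] by simp
  have qsub: "sublin q"
    unfolding sublin_def
  proof (intro conjI allI impI)
    fix y1 y2
    have "q (y1 + y2) - q y2 \<le> q y1"
    proof (rule qge)
      fix w1 assume w1: "w1 \<in> Kc"
      have "q (y1 + y2) - norm (y1 + w1) \<le> q y2"
      proof (rule qge)
        fix w2 assume w2: "w2 \<in> Kc"
        have "q (y1 + y2) \<le> norm (y1 + y2 + (w1 + w2))" using qle Kadd[OF w1 w2] by blast
        also have "\<dots> \<le> norm (y1 + w1) + norm (y2 + w2)"
          using norm_triangle_ineq[of "y1 + w1" "y2 + w2"] by (simp add: algebra_simps)
        finally show "q (y1 + y2) - norm (y1 + w1) \<le> norm (y2 + w2)" by simp
      qed
      then show "q (y1 + y2) - q y2 \<le> norm (y1 + w1)" by simp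
    qed
    then show "q (y1 + y2) \<le> q y1 + q y2" by simp
  next
    fix c :: real and y assume c: "0 \<le> c"
    show "q (c *\<^sub>R y) = c * q y"
    proof (cases "c = 0")
      case True
      have "q 0 \<le> 0" using qnorm[of 0] by simp
      then show ?thesis using True q0[of 0] by simp
    next
      case False
      then have cp: "c > 0" using c by simp
      have A: "q (c *\<^sub>R y) \<le> c * q y"
      proof -
        have "q (c *\<^sub>R y) / c \<le> q y"
        proof (rule qge)
          fix w assume "w \<in> Kc"
          then have "q (c *\<^sub>R y) \<le> norm (c *\<^sub>R y + c *\<^sub>R w)" using qle Kscale c by blast
          also have "\<dots> = c * norm (y + w)" using c by (simp add: scaleR_add_right[symmetric])
          finally show "q (c *\<^sub>R y) / c \<le> norm (y + w)" using cp by (simp add: field_simps)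
        qed
        then show ?thesis using cp by (simp add: field_simps)
      qed
      have B: "c * q y \<le> q (c *\<^sub>R y)"
      proof (rule qge)
        fix w assume "w \<in> Kc"
        then have "(1/c) *\<^sub>R w \<in> Kc" using Kscale cp by simp
        then have "q y \<le> norm (y + (1/c) *\<^sub>R w)" using qle by blast
        also have "\<dots> = norm (c *\<^sub>R y + w) / c"
        proof -
          have "c *\<^sub>R y + w = c *\<^sub>R (y + (1/c) *\<^sub>R w)" using cp by (simp add: algebra_simps)
          then show ?thesis using cp by simp
        qed
        finally show "c * q y \<le> norm (c *\<^sub>R y + w)" using cp by (simp add: field_simps)
      qed
      show ?thesis using A B by simp
    qed
  qed
  have qz0: "q z0 \<ge> 1"
  proof (rule qge)
    fix w assume w: "w \<in> Kc"
    show "1 \<le> norm (z0 + w)"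
    proof (cases "w = 0")
      case True then show ?thesis using z0one by simp
    next
      case False then show ?thesis using z0max w Kc_def by fastforce
    qed
  qed
  have z0ne: "z0 \<noteq> 0" using z0one by auto
  define G0 where "G0 = range (\<lambda>t. (t *\<^sub>R z0, t))"
  have hg: "hbgood q G0"
    unfolding hbgood_def G0_def
  proof (intro conjI allI impI)
    fix y a b assume "(y, a) \<in> range (\<lambda>t. (t *\<^sub>R z0, t))" "(y, b) \<in> range (\<lambda>t. (t *\<^sub>R z0, t))"
    then have "a *\<^sub>R z0 = b *\<^sub>R z0" by auto
    then show "a = b" using z0ne by simp
  next
    fix y a y' b assume "(y, a) \<in> range (\<lambda>t. (t *\<^sub>R z0, t))" "(y', b) \<in> range (\<lambda>t. (t *\<^sub>R z0, t))"
    then have "y = a *\<^sub>R z0" "y' = b *\<^sub>R z0" by auto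
    then have "(y + y', a + b) = ((a+b) *\<^sub>R z0, a + b)" by (simp add: scaleR_add_left)
    then show "(y + y', a + b) \<in> range (\<lambda>t. (t *\<^sub>R z0, t))" using rangeI[of "\<lambda>t. (t *\<^sub>R z0, t)" "a+b"] by simp
  next
    fix y a c assume "(y, a) \<in> range (\<lambda>t. (t *\<^sub>R z0, t))"
    then have "y = a *\<^sub>R z0" by auto
    then have "(c *\<^sub>R y, c * a) = ((c*a) *\<^sub>R z0, c * a)" by simp
    then show "(c *\<^sub>R y, c * a) \<in> range (\<lambda>t. (t *\<^sub>R z0, t))" using rangeI[of "\<lambda>t. (t *\<^sub>R z0, t)" "c*a"] by simp
  next
    fix y a assume "(y, a) \<in> range (\<lambda>t. (t *\<^sub>R z0, t))"
    then have y: "y = a *\<^sub>R z0" by auto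
    show "a \<le> q y"
    proof (cases "a \<ge> 0")
      case True
      have "q y = a * q z0" using qsub True y unfolding sublin_def by blast
      also have "\<dots> \<ge> a * 1" using True qz0 by (intro mult_left_mono) auto
      finally show ?thesis by simp
    next
      case False then show ?thesis using q0[of y] by simp
    qed
  qed
  obtain g where glin: "linear g" and gq: "\<And>y. g y \<le> q y" and gG0: "\<And>y a. (y, a) \<in> G0 \<Longrightarrow> g y = a"
    using hahn_banach[OF qsub hg] G0_def by blast
  have gz0: "g z0 = 1" using gG0[of z0 1] rangeI[of "\<lambda>t. (t *\<^sub>R z0, t)" 1] G0_def by simp
  have gnorm: "g y \<le> norm y" for y using gq[of y] qnorm[of y] by simp
  have gadd: "g (u + v) = g u + g v" for u v using linear_add[OF glin] .
  have gdiff: "g (u - v) = g u - g v" for u v using linear_diff[OF glin] .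
  have gscale: "g (c *\<^sub>R u) = c * g u" for c u using linear_scale[OF glin] by simp
  have gK: "g w \<ge> 0" if "w \<in> Kc" for w
  proof -
    have "g (- w) \<le> q (- w)" by (rule gq)
    also have "\<dots> \<le> norm (- w + w)" using qle[OF that] .
    finally show ?thesis using linear_neg[OF glin, of w] by simp
  qed
  define t where "t = 1 / (k * a - 1)"
  have ka: "k * a \<ge> 2"
  proof -
    have "k * a \<ge> 4 * (1/2)" by (rule mult_mono[OF k a(1)]) (use k in auto)
    then show ?thesis by simp
  qed
  have tpos: "t > 0" using ka t_def by simp
  have kat: "k * a * t = t + 1" using ka t_def by (simp add: field_simps)
  have tle: "t \<le> 2 / (k - 2)"
  proof -
    have h1: "k * a - 1 \<ge> k / 2 - 1" using mult_left_mono[OF a(1), of k] k by simp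
    have p2: "k / 2 - 1 > 0" using k by simp
    have p1: "k * a - 1 > 0" using ka by simp
    have "1 / (k * a - 1) \<le> 1 / (k/2 - 1)"
      using divide_left_mono[OF h1, of 1] mult_pos_pos[OF p1 p2] by simp
    also have "1 / (k/2 - 1) = 2 / (k - 2)" using k by (simp add: field_simps)
    finally show ?thesis using t_def by simp
  qed
  have gx: "g x \<le> 1" using gnorm[of x] x by simp
  have gx0: "g x \<ge> 0" using gK[OF xK] .
  have ker: "\<bar>g y'\<bar> \<le> t * norm y'" if fy': "f y' = 0" for y'
  proof -
    define s where "s = t * norm y'"
    have s0: "s \<ge> 0" using tpos s_def by simp
    have e1: "f (s *\<^sub>R x) = s * a" using fscale a_def by simp
    have "k * f (s *\<^sub>R x) = k * (s * a)" by (simp only: e1)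
    also have "\<dots> = (k * a * t) * norm y'" by (simp add: s_def algebra_simps)
    also have "\<dots> = (t + 1) * norm y'" using kat by simp
    also have "\<dots> = s + norm y'" using s_def by (simp add: algebra_simps)
    finally have ks: "k * f (s *\<^sub>R x) = s + norm y'" .
    have nx: "norm (s *\<^sub>R x) \<le> s" using x s0 by (simp add: mult_left_le)
    have wp: "s *\<^sub>R x + y' \<in> Kc"
    proof -
      have "norm (s *\<^sub>R x + y') \<le> s + norm y'" using norm_triangle_ineq[of "s *\<^sub>R x" y'] nx by simp
      also have "\<dots> = k * f (s *\<^sub>R x + y')" using ks fadd fy' by simp
      finally show ?thesis using Kc_def by simp
    qed
    have wm: "s *\<^sub>R x - y' \<in> Kc"
    proof -
      have "norm (s *\<^sub>R x - y') \<le> s + norm y'" using norm_triangle_ineq4[of "s *\<^sub>R x" y'] nx by simp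
      also have "\<dots> = k * f (s *\<^sub>R x - y')" using ks fdiff fy' by simp
      finally show ?thesis using Kc_def by simp
    qed
    have "s * g x + g y' \<ge> 0" using gK[OF wp] gadd gscale by simp
    moreover have "s * g x - g y' \<ge> 0" using gK[OF wm] gdiff gscale by simp
    moreover have "s * g x \<le> s" using gx s0 by (simp add: mult_left_le)
    ultimately show ?thesis using s_def by linarith
  qed
  define c where "c = g x / a"
  have c0: "c \<ge> 0" using gx0 a c_def by simp
  have main: "\<bar>g y - c * f y\<bar> \<le> 3 * t * norm y" for y
  proof -
    define y' where "y' = y - (f y / a) *\<^sub>R x"
    have fy': "f y' = 0" using fdiff fscale a a_def y'_def by simp
    have "norm y' \<le> norm y + norm ((f y / a) *\<^sub>R x)" using norm_triangle_ineq4 y'_def by blast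
    also have "norm ((f y / a) *\<^sub>R x) \<le> 2 * norm y"
    proof -
      have "norm ((f y / a) *\<^sub>R x) = \<bar>f y\<bar> / a * norm x" using a by simp
      also have "\<dots> \<le> \<bar>f y\<bar> / a" by (rule mult_left_le[OF x]) (use a in simp)
      also have "\<dots> \<le> norm y / a" using fb a by (simp add: divide_right_mono)
      also have "\<dots> \<le> norm y / (1/2)" using a by (intro divide_left_mono) auto
      finally show ?thesis by simp
    qed
    finally have ny': "norm y' \<le> 3 * norm y" by simp
    have "g y = (f y / a) * g x + g y'" using gdiff gscale y'_def by simp
    then have "g y - c * f y = g y'" using c_def by simp
    then have "\<bar>g y - c * f y\<bar> \<le> t * norm y'" using ker[OF fy'] by simp
    also have "\<dots> \<le> t * (3 * norm y)" using ny' tpos by (intro mult_left_mono) auto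
    finally show ?thesis by simp
  qed
  have cup: "c \<le> 1 / a" using gx a c_def by (simp add: divide_right_mono)
  have clow: "c \<ge> 1 - 3 * t"
  proof -
    have "\<bar>g z0 - c * f z0\<bar> \<le> 3 * t" using main[of z0] z0one by simp
    then have "1 - 3 * t \<le> c * f z0" using gz0 by simp
    also have "\<dots> \<le> c * 1" using fb[of z0] z0one c0 by (intro mult_left_mono) auto
    finally show ?thesis by simp
  qed
  have ainv: "1 / a - 1 \<le> 2 * \<eta>"
  proof -
    have "1 / a - 1 = (1 - a) / a" using a by (simp add: field_simps)
    also have "\<dots> \<le> \<eta> / a" using fx a_def a by (intro divide_right_mono) auto
    also have "\<dots> \<le> \<eta> / (1/2)" using a eta by (intro divide_left_mono) auto
    finally show ?thesis by simp
  qed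
  have c1: "\<bar>c - 1\<bar> \<le> 3 * t + 2 * \<eta>" using cup clow ainv tpos eta by auto
  have fin: "\<bar>g y - f y\<bar> \<le> (12/(k-2) + 2*\<eta>) * norm y" for y
  proof -
    have eq: "g y - f y = (g y - c * f y) + (c - 1) * f y" by (simp add: algebra_simps)
    have "\<bar>g y - f y\<bar> \<le> \<bar>g y - c * f y\<bar> + \<bar>(c - 1) * f y\<bar>"
      unfolding eq by (rule abs_triangle_ineq)
    also have "\<dots> = \<bar>g y - c * f y\<bar> + \<bar>c - 1\<bar> * \<bar>f y\<bar>" by (simp add: abs_mult)
    finally have "\<bar>g y - f y\<bar> \<le> \<bar>g y - c * f y\<bar> + \<bar>c - 1\<bar> * \<bar>f y\<bar>" .
    also have "\<dots> \<le> 3 * t * norm y + (3 * t + 2 * \<eta>) * norm y"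
      using main[of y] c1 fb[of y] by (intro add_mono mult_mono) auto
    also have "\<dots> = (6 * t + 2 * \<eta>) * norm y" by (simp add: algebra_simps)
    also have "\<dots> \<le> (12/(k-2) + 2*\<eta>) * norm y" using tle by (intro mult_right_mono) auto
    finally show ?thesis .
  qed
  show ?thesis using glin gnorm gz0 z0one z0close fin by blast
qed



lemma ss_cases:
  assumes "scalar_setting K sm"
  obtains (R) "K = \<real>" "\<And>c x. sm c x = Re c *\<^sub>R x" | (C) "K = UNIV" "complex_structure sm"
  using assms unfolding scalar_setting_def by blast

lemma real_of_Re: "c \<in> \<real> \<Longrightarrow> complex_of_real (Re c) = c"
  by (simp add: complex_eq_iff complex_is_Real_iff)

lemma ss_K:
  assumes "scalar_setting K sm"
  shows "a \<in> K \<Longrightarrow> b \<in> K \<Longrightarrow> a - b \<in> K" "a \<in> K \<Longrightarrow> b \<in> K \<Longrightarrow> a * b \<in> K"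
    "a \<in> K \<Longrightarrow> cnj a \<in> K" "complex_of_real r \<in> K"
  using assms by (cases rule: ss_cases; auto simp: complex_is_Real_iff)+

lemma ss_unimod_K: "a \<in> unimod K \<Longrightarrow> a \<in> K" and unimod_cmod: "a \<in> unimod K \<Longrightarrow> cmod a = 1"
  unfolding unimod_def by auto

lemma ss_unimod_cnj: "scalar_setting K sm \<Longrightarrow> a \<in> unimod K \<Longrightarrow> cnj a \<in> unimod K"
  unfolding unimod_def using ss_K(3) by auto

lemma ss_norm:
  assumes ss: "scalar_setting K sm" and a: "a \<in> unimod K"
  shows "norm (sm a y) = norm y"
  using ss
proof (cases rule: ss_cases)
  case R
  have "a \<in> \<real>" "cmod a = 1" using a R unfolding unimod_def by auto
  then have "\<bar>Re a\<bar> = 1" by (metis norm_of_real real_of_Re)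
  then show ?thesis using R by simp
next
  case C
  then show ?thesis using a unfolding complex_structure_def unimod_def by simp
qed

lemma ss_phase:
  assumes ss: "scalar_setting K sm" and z: "z \<in> K"
  shows "\<exists>a\<in>unimod K. a * z = complex_of_real (cmod z)"
  using ss
proof (cases rule: ss_cases)
  case R
  then have zr: "z = complex_of_real (Re z)" using z real_of_Re by simp
  show ?thesis
  proof (cases "Re z \<ge> 0")
    case True
    have "1 \<in> unimod K" using R unfolding unimod_def by simp
    moreover have "1 * z = complex_of_real (cmod z)" using True zr by (metis abs_of_nonneg mult_1 norm_of_real)
    ultimately show ?thesis by blast
  next
    case False
    have "-1 \<in> unimod K" using R unfolding unimod_def by simp
    moreover have "(-1) * z = complex_of_real (cmod z)" using False zr
      by (metis abs_of_neg mult_minus1 not_le norm_of_real of_real_minus)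
    ultimately show ?thesis by blast
  qed
next
  case C
  show ?thesis
  proof (cases "z = 0")
    case True
    then show ?thesis using C unfolding unimod_def by (intro bexI[of _ 1]) auto
  next
    case False
    have "cnj z / complex_of_real (cmod z) \<in> unimod K" using C False unfolding unimod_def
      by (simp add: norm_divide)
    moreover have "(cnj z / complex_of_real (cmod z)) * z = complex_of_real (cmod z)"
    proof -
      have "z * cnj z = complex_of_real (cmod z) * complex_of_real (cmod z)"
        using complex_norm_square[of z] by (simp add: power2_eq_square)
      then show ?thesis using False by (simp add: field_simps)
    qed
    ultimately show ?thesis by blast
  qed
qed

lemma dualD:
  assumes "f \<in> dual K sm"
  shows "bounded_linear f" "f x \<in> K" "c \<in> K \<Longrightarrow> f (sm c x) = c * f x"
  using assms unfolding dual_def by auto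

lemma dual_diff:
  assumes ss: "scalar_setting K sm" and f: "f \<in> dual K sm" and g: "g \<in> dual K sm"
  shows "(\<lambda>x. f x - g x) \<in> dual K sm"
  using dualD[OF f] dualD[OF g] ss_K(1)[OF ss] unfolding dual_def
  by (auto intro: bounded_linear_sub simp: right_diff_distrib)

lemma dual_cmult:
  assumes ss: "scalar_setting K sm" and f: "f \<in> dual K sm" and c: "c \<in> K"
  shows "(\<lambda>x. c * f x) \<in> dual K sm"
  using dualD[OF f] ss_K(2)[OF ss] c unfolding dual_def
  by (auto intro: bounded_linear_const_mult simp: mult.left_commute)

lemma norm_from_re:
  assumes ss: "scalar_setting K sm" and D: "D \<in> dual K sm" and re: "\<And>v. Re (D v) \<le> E * norm v"
  shows "cmod (D y) \<le> E * norm y"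
proof -
  obtain a where a: "a \<in> unimod K" "a * D y = complex_of_real (cmod (D y))"
    using ss_phase[OF ss dualD(2)[OF D]] by blast
  have "D (sm a y) = complex_of_real (cmod (D y))" using dualD(3)[OF D ss_unimod_K[OF a(1)]] a(2) by simp
  then have "cmod (D y) = Re (D (sm a y))" by simp
  also have "\<dots> \<le> E * norm (sm a y)" by (rule re)
  also have "\<dots> = E * norm y" using ss_norm[OF ss a(1)] by simp
  finally show ?thesis .
qed

lemma complexify:
  fixes g :: "'a::real_normed_vector \<Rightarrow> real"
  assumes ss: "scalar_setting K sm" and glin: "linear g" and gb: "\<And>y. g y \<le> norm y"
  shows "\<exists>G. G \<in> dual K sm \<and> (\<forall>y. Re (G y) = g y)"
proof -
  have gadd: "g (u + v) = g u + g v" for u v using linear_add[OF glin] .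
  have gscale: "g (c *\<^sub>R u) = c * g u" for c u using linear_scale[OF glin] by simp
  have gabs: "\<bar>g y\<bar> \<le> norm y" for y
    using gb[of y] gb[of "-y"] linear_neg[OF glin, of y] by simp
  show ?thesis
    using ss
  proof (cases rule: ss_cases)
    case R
    define G where "G y = complex_of_real (g y)" for y
    have "bounded_linear G"
      by (rule bounded_linear_intro[where K=1]) (auto simp: G_def gadd gscale gabs scaleR_conv_of_real)
    moreover have "\<forall>x. G x \<in> K" using R G_def by simp
    moreover have "\<forall>c\<in>K. \<forall>x. G (sm c x) = c * G x"
      using R G_def gscale real_of_Re by (metis of_real_mult)
    ultimately have "G \<in> dual K sm" unfolding dual_def by blast
    moreover have "\<forall>y. Re (G y) = g y" using G_def by simp
    ultimately show ?thesis by blast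
  next
    case C
    have sm_add: "sm (a + b) x = sm a x + sm b x" and sm_addv: "sm a (x + y) = sm a x + sm a y"
      and sm_mult: "sm (a * b) x = sm a (sm b x)" and sm_real: "sm (complex_of_real r) x = r *\<^sub>R x"
      and sm_norm: "norm (sm a x) = cmod a * norm x" for a b x y r
      using C(2) unfolding complex_structure_def by blast+
    define J where "J x = sm \<i> x" for x
    have Jadd: "J (x + y) = J x + J y" for x y using sm_addv J_def by simp
    have Jscale: "J (r *\<^sub>R x) = r *\<^sub>R J x" for r x
    proof -
      have "J (r *\<^sub>R x) = sm (\<i> * complex_of_real r) x" using J_def sm_mult sm_real by metis
      also have "\<dots> = sm (complex_of_real r * \<i>) x" by (simp add: mult.commute)
      also have "\<dots> = r *\<^sub>R J x" using J_def sm_mult sm_real by metis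
      finally show ?thesis .
    qed
    have JJ: "J (J x) = - x" for x
    proof -
      have "J (J x) = sm (\<i> * \<i>) x" using J_def sm_mult by metis
      also have "\<dots> = sm (complex_of_real (-1)) x" by simp
      also have "\<dots> = - x" using sm_real[of "-1" x] by simp
      finally show ?thesis .
    qed
    have Jnorm: "norm (J x) = norm x" for x using sm_norm J_def by simp
    have smdec: "sm c x = Re c *\<^sub>R x + Im c *\<^sub>R J x" for c x
    proof -
      have "sm c x = sm (complex_of_real (Re c) + complex_of_real (Im c) * \<i>) x"
        using complex_eq[of c] by (simp add: mult.commute)
      also have "\<dots> = Re c *\<^sub>R x + Im c *\<^sub>R J x" using sm_add sm_mult sm_real J_def by metis
      finally show ?thesis .
    qed
    define G where "G y = complex_of_real (g y) - \<i> * complex_of_real (g (J y))" for y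
    have Gadd: "G (x + y) = G x + G y" for x y unfolding G_def by (simp add: Jadd gadd algebra_simps)
    have Gscale: "G (r *\<^sub>R x) = r *\<^sub>R G x" for r x
      unfolding G_def by (simp add: Jscale gscale algebra_simps scaleR_conv_of_real)
    have GJ: "G (J x) = \<i> * G x" for x
    proof -
      have "g (J (J x)) = - g x" using JJ linear_neg[OF glin] by simp
      then show ?thesis unfolding G_def by (simp add: algebra_simps)
    qed
    have Gb: "norm (G x) \<le> norm x * 2" for x
    proof -
      have "norm (G x) \<le> cmod (complex_of_real (g x)) + cmod (\<i> * complex_of_real (g (J x)))"
        unfolding G_def by (rule norm_triangle_ineq4)
      also have "\<dots> = \<bar>g x\<bar> + \<bar>g (J x)\<bar>" by (simp add: norm_mult)
      also have "\<dots> \<le> norm x + norm x" using gabs[of x] gabs[of "J x"] Jnorm[of x] by simp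
      finally show ?thesis by simp
    qed
    have "bounded_linear G" by (rule bounded_linear_intro[where K=2]) (use Gadd Gscale Gb in auto)
    moreover have "\<forall>c\<in>K. \<forall>x. G (sm c x) = c * G x"
    proof (intro ballI allI)
      fix c x
      have "G (sm c x) = Re c *\<^sub>R G x + Im c *\<^sub>R G (J x)" using smdec Gadd Gscale by simp
      also have "\<dots> = (complex_of_real (Re c) + \<i> * complex_of_real (Im c)) * G x"
        using GJ by (simp add: scaleR_conv_of_real algebra_simps)
      also have "\<dots> = c * G x" using complex_eq[of c] by simp
      finally show "G (sm c x) = c * G x" .
    qed
    ultimately have "G \<in> dual K sm" using C unfolding dual_def by blast
    moreover have "\<forall>y. Re (G y) = g y" unfolding G_def by simp
    ultimately show ?thesis by blast
  qed
qed



lemma ss_diff: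
  assumes ss: "scalar_setting K sm"
  shows "sm a (x - y) = sm a x - sm a y"
  using ss
proof (cases rule: ss_cases)
  case R then show ?thesis by (simp add: scaleR_diff_right)
next
  case C
  have "sm a ((x - y) + y) = sm a (x - y) + sm a y" using C(2) unfolding complex_structure_def by blast
  then show ?thesis by simp
qed

lemma bpb_dual:
  assumes ss: "scalar_setting K sm" and e: "e > 0"
  shows "\<exists>\<eta>>0. \<forall>h (x::'a::banach). h \<in> dual K sm \<longrightarrow> (\<forall>z. cmod (h z) \<le> norm z) \<longrightarrow> norm x \<le> 1 \<longrightarrow> Re (h x) > 1 - \<eta> \<longrightarrow>
     (\<exists>G z0. G \<in> dual K sm \<and> onorm G = 1 \<and> G z0 = 1 \<and> norm z0 = 1 \<and> norm (z0 - x) \<le> e \<and> (\<forall>y. cmod (G y - h y) \<le> e * norm y))"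
proof -
  define k where "k = 4 + 24/e"
  define \<eta> where "\<eta> = min (1/2) (min (e/4) (e/k))"
  have k4: "k \<ge> 4" using e k_def by simp
  have eta1: "\<eta> > 0" unfolding \<eta>_def using e k4 by simp
  have eta2: "\<eta> \<le> 1/2" unfolding \<eta>_def by (rule min.cobounded1)
  have eta3: "\<eta> \<le> e/4" unfolding \<eta>_def by (meson min.cobounded1 min.cobounded2 order_trans)
  have eta4: "\<eta> \<le> e/k" unfolding \<eta>_def by (meson min.cobounded2 order_trans)
  note eta = eta1 eta2 eta3 eta4
  have E: "12/(k-2) + 2*\<eta> \<le> e"
  proof -
    have k2: "k - 2 = (2*e + 24) / e" using e k_def by (simp add: field_simps)
    have "12/(k-2) = 12 * e / (2*e + 24)" unfolding k2 using e by simp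
    also have "\<dots> \<le> e/2" using e by (simp add: field_simps)
    finally show ?thesis using eta by simp
  qed
  have keta: "k * \<eta> \<le> e" using eta(4) k4 by (simp add: field_simps)
  show ?thesis
  proof (intro exI[of _ \<eta>] conjI allI impI)
    show "\<eta> > 0" by (rule eta(1))
    fix h and x :: 'a
    assume hd: "h \<in> dual K sm" and hb: "\<forall>z. cmod (h z) \<le> norm z" and xn: "norm x \<le> 1" and hx: "Re (h x) > 1 - \<eta>"
    define f where "f y = Re (h y)" for y
    have lin: "linear f" unfolding f_def
      using bounded_linear.linear[OF bounded_linear_compose[OF bounded_linear_Re dualD(1)[OF hd]]] .
    have fb: "\<bar>f y\<bar> \<le> norm y" for y unfolding f_def using abs_Re_le_cmod[of "h y"] hb by (meson order_trans)
    have fx: "f x \<ge> 1 - \<eta>" using hx f_def by simp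
    obtain g z0 where glin: "linear g" and gb: "\<forall>y. g y \<le> norm y" and gz0: "g z0 = 1" and z0n: "norm z0 = 1"
      and z0x: "norm (z0 - x) \<le> k * \<eta>" and gf: "\<forall>y. \<bar>g y - f y\<bar> \<le> (12/(k-2) + 2*\<eta>) * norm y"
      using bpb_real[OF lin fb xn k4 eta(1) eta(2) fx] by blast
    obtain G where Gd: "G \<in> dual K sm" and ReG: "\<forall>y. Re (G y) = g y"
      using complexify[OF ss glin] gb by blast
    have Gb: "cmod (G y) \<le> norm y" for y using norm_from_re[OF ss Gd, of 1] ReG gb by simp
    have Gz0: "G z0 = 1"
    proof -
      have r: "Re (G z0) = 1" using ReG gz0 by simp
      have "cmod (G z0) \<le> 1" using Gb[of z0] z0n by simp
      then have "(cmod (G z0))^2 \<le> 1" by (simp add: power_le_one)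
      then have "(Im (G z0))^2 \<le> 0" using cmod_power2[of "G z0"] r by simp
      then have "(Im (G z0))^2 = 0" using zero_le_power2[of "Im (G z0)"] by linarith
      then have "Im (G z0) = 0" by simp
      then show ?thesis using r by (simp add: complex_eq_iff)
    qed
    have blG: "bounded_linear G" using dualD(1)[OF Gd] .
    have "onorm G \<le> 1" by (rule onorm_bound) (use Gb in auto)
    moreover have "1 \<le> onorm G" using le_onorm[OF blG, of z0] Gz0 z0n by simp
    ultimately have Go: "onorm G = 1" by simp
    have Dd: "(\<lambda>y. G y - h y) \<in> dual K sm" using dual_diff[OF ss Gd hd] .
    have re: "Re ((\<lambda>y. G y - h y) v) \<le> (12/(k-2) + 2*\<eta>) * norm v" for v
    proof -
      have "Re (G v - h v) = g v - f v" using ReG f_def by simp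
      also have "\<dots> \<le> \<bar>g v - f v\<bar>" by simp
      also have "\<dots> \<le> (12/(k-2) + 2*\<eta>) * norm v" using gf by blast
      finally show ?thesis by simp
    qed
    have Gh: "cmod (G y - h y) \<le> e * norm y" for y
    proof -
      have "cmod ((\<lambda>y. G y - h y) y) \<le> (12/(k-2) + 2*\<eta>) * norm y" by (rule norm_from_re[OF ss Dd re])
      also have "\<dots> \<le> e * norm y" using E by (intro mult_right_mono) auto
      finally show ?thesis by simp
    qed
    show "\<exists>G z0. G \<in> dual K sm \<and> onorm G = 1 \<and> G z0 = 1 \<and> norm z0 = 1 \<and> norm (z0 - x) \<le> e \<and> (\<forall>y. cmod (G y - h y) \<le> e * norm y)"
      using Gd Go Gz0 z0n z0x keta Gh by (intro exI[of _ G] exI[of _ z0]) auto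
  qed
qed

lemma lip_facts:
  fixes T :: "'a::real_normed_vector \<Rightarrow> 'a"
  assumes T: "T \<in> Lip0" and nz: "\<exists>x::'a. x \<noteq> 0" and ln: "lip_norm T = 1"
  shows "\<forall>x y. norm (T x - T y) \<le> norm (x - y)"
    and "\<forall>\<epsilon>>0. \<exists>u v. u \<noteq> v \<and> norm (T u - T v) > (1 - \<epsilon>) * norm (u - v)"
proof -
  obtain C where C: "lipschitz_on C UNIV T" using T Lip0_def by blast
  define R where "R = {norm (T x - T y) / norm (x - y) | x y. x \<noteq> y}"
  have bdd: "bdd_above R"
  proof (rule bdd_aboveI[where M=C])
    fix r assume "r \<in> R"
    then obtain x y where xy: "x \<noteq> y" "r = norm (T x - T y) / norm (x - y)" using R_def by blast
    have "norm (T x - T y) \<le> C * norm (x - y)" using lipschitz_onD[OF C] by (simp add: dist_norm)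
    then show "r \<le> C" using xy by (simp add: divide_le_eq)
  qed
  obtain x0 :: 'a where "x0 \<noteq> 0" using nz by blast
  then have "norm (T x0 - T 0) / norm (x0 - 0) \<in> R" using R_def by blast
  then have Rne: "R \<noteq> {}" by blast
  have Sup: "Sup R = 1" using ln unfolding lip_norm_def R_def by simp
  show "\<forall>x y. norm (T x - T y) \<le> norm (x - y)"
  proof (intro allI)
    fix x y
    show "norm (T x - T y) \<le> norm (x - y)"
    proof (cases "x = y")
      case True then show ?thesis by simp
    next
      case False
      then have "norm (T x - T y) / norm (x - y) \<in> R" using R_def by blast
      then have "norm (T x - T y) / norm (x - y) \<le> 1" using cSup_upper[OF _ bdd] Sup by metis
      then show ?thesis using False by (simp add: divide_le_eq)
    qed
  qed
  show "\<forall>\<epsilon>>0. \<exists>u v. u \<noteq> v \<and> norm (T u - T v) > (1 - \<epsilon>) * norm (u - v)"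
  proof (intro allI impI)
    fix \<epsilon> :: real assume "\<epsilon> > 0"
    then have "1 - \<epsilon> < Sup R" using Sup by simp
    then obtain r where "r \<in> R" "1 - \<epsilon> < r" using less_cSupD[OF Rne] by blast
    then obtain u v where uv: "u \<noteq> v" "1 - \<epsilon> < norm (T u - T v) / norm (u - v)" using R_def by blast
    then show "\<exists>u v. u \<noteq> v \<and> norm (T u - T v) > (1 - \<epsilon>) * norm (u - v)"
      by (intro exI[of _ u] exI[of _ v]) (simp add: less_divide_eq)
  qed
qed



lemma core:
  fixes T :: "'a::real_normed_vector \<Rightarrow> 'a"
  assumes ss: "scalar_setting K sm" and Tl: "\<And>a b. norm (T a - T b) \<le> norm (a - b)"
    and ysd: "ys \<in> dual K sm" and ysb: "\<And>z. cmod (ys z) \<le> norm z"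
    and r: "r > 0" and ruv: "norm (u - v) = r"
    and big: "Re (ys (T u - T v)) \<ge> r * (1 - 2*\<epsilon>)"
    and mu: "1/2 \<le> \<mu>" "\<mu> \<le> 1" and b1: "\<beta>1 \<in> unimod K" and b2: "\<beta>2 \<in> unimod K"
    and z1: "norm z1 \<le> 1" and z2: "norm z2 \<le> 1"
    and comb: "norm ((1/r) *\<^sub>R (u - v) - (\<mu> *\<^sub>R sm \<beta>1 z1 + (1-\<mu>) *\<^sub>R sm \<beta>2 z2)) < \<epsilon>"
    and Gd: "G \<in> dual K sm" and Go: "onorm G = 1" and Gz0: "G z0 = 1" and z0n: "norm z0 = 1"
    and z0z1: "norm (z0 - z1) \<le> \<epsilon>'" and Gys: "\<And>y. cmod (G y - ys y) \<le> \<epsilon>' * norm y"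
    and eps: "\<epsilon> \<ge> 0" "\<epsilon>' \<ge> 0"
  shows "\<exists>p q F. p \<noteq> q \<and> F \<in> Dset K sm (p - q) \<and> cmod (F (T p - T q)) / (norm (p - q))^2 \<ge> 1 - 6*\<epsilon> - 2*\<epsilon>'"
proof -
  define s where "s = r * \<mu>"
  have s0: "s > 0" using r mu s_def by simp
  have r2s: "r \<le> 2 * s" using r mu s_def by simp
  define w1 where "w1 = v + s *\<^sub>R sm \<beta>1 z1"
  define w2 where "w2 = w1 + (r * (1 - \<mu>)) *\<^sub>R sm \<beta>2 z2"
  have blys: "bounded_linear ys" using dualD(1)[OF ysd] .
  have ysadd: "ys (a + b) = ys a + ys b" for a b using linear_add[OF bounded_linear.linear[OF blys]] .
  have reb: "\<bar>Re (ys z)\<bar> \<le> norm z" for z using abs_Re_le_cmod[of "ys z"] ysb[of z] by linarith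
  have uw2: "u - w2 = r *\<^sub>R ((1/r) *\<^sub>R (u - v) - (\<mu> *\<^sub>R sm \<beta>1 z1 + (1-\<mu>) *\<^sub>R sm \<beta>2 z2))"
    using r by (simp add: w1_def w2_def s_def algebra_simps)
  have n_uw2: "norm (u - w2) \<le> r * \<epsilon>"
  proof -
    have "norm (u - w2) = r * norm ((1/r) *\<^sub>R (u - v) - (\<mu> *\<^sub>R sm \<beta>1 z1 + (1-\<mu>) *\<^sub>R sm \<beta>2 z2))"
      unfolding uw2 using r by simp
    also have "\<dots> \<le> r * \<epsilon>" using comb r by (intro mult_left_mono) auto
    finally show ?thesis .
  qed
  have n_w21: "norm (w2 - w1) \<le> r * (1 - \<mu>)"
  proof -
    have "norm (w2 - w1) = r * (1 - \<mu>) * norm z2" using r mu ss_norm[OF ss b2] by (simp add: w2_def)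
    also have "\<dots> \<le> r * (1 - \<mu>) * 1" using r mu z2 by (intro mult_left_mono) auto
    finally show ?thesis by simp
  qed
  have dec: "T u - T v = (T w1 - T v) + ((T w2 - T w1) + (T u - T w2))" by simp
  have e1: "ys (T u - T v) = ys (T w1 - T v) + (ys (T w2 - T w1) + ys (T u - T w2))"
    by (simp only: dec ysadd)
  have "Re (ys (T u - T v)) = Re (ys (T w1 - T v)) + (Re (ys (T w2 - T w1)) + Re (ys (T u - T w2)))"
    unfolding e1 by simp
  moreover have "Re (ys (T w2 - T w1)) \<le> r * (1 - \<mu>)"
    using reb[of "T w2 - T w1"] Tl[of w2 w1] n_w21 by linarith
  moreover have "Re (ys (T u - T w2)) \<le> r * \<epsilon>"
    using reb[of "T u - T w2"] Tl[of u w2] n_uw2 by linarith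
  ultimately have A: "Re (ys (T w1 - T v)) \<ge> s - 3 * r * \<epsilon>" using big s_def by (simp add: algebra_simps)
  define p where "p = v + s *\<^sub>R sm \<beta>1 z0"
  have pw1: "p - w1 = s *\<^sub>R sm \<beta>1 (z0 - z1)" by (simp add: p_def w1_def ss_diff[OF ss] algebra_simps)
  have n_pw1: "norm (p - w1) \<le> s * \<epsilon>'"
  proof -
    have "norm (p - w1) = s * norm (z0 - z1)" unfolding pw1 using s0 ss_norm[OF ss b1] by simp
    also have "\<dots> \<le> s * \<epsilon>'" using z0z1 s0 by (intro mult_left_mono) auto
    finally show ?thesis .
  qed
  have pv: "p - v = s *\<^sub>R sm \<beta>1 z0" by (simp add: p_def)
  have npv: "norm (p - v) = s" unfolding pv using s0 ss_norm[OF ss b1] z0n by simp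
  have dec2: "T p - T v = (T w1 - T v) + (T p - T w1)" by simp
  have e2: "ys (T p - T v) = ys (T w1 - T v) + ys (T p - T w1)"
    by (simp only: dec2 ysadd)
  have "Re (ys (T p - T v)) = Re (ys (T w1 - T v)) + Re (ys (T p - T w1))"
    unfolding e2 by simp
  moreover have "Re (ys (T p - T w1)) \<ge> - (s * \<epsilon>')"
    using reb[of "T p - T w1"] Tl[of p w1] n_pw1 by linarith
  moreover have "3 * r * \<epsilon> \<le> 6 * s * \<epsilon>" using r2s eps by (simp add: mult_right_mono)
  ultimately have B: "Re (ys (T p - T v)) \<ge> s - 6 * s * \<epsilon> - s * \<epsilon>'" using A by linarith
  have C: "cmod (ys (T p - T v)) \<ge> s - 6 * s * \<epsilon> - s * \<epsilon>'"
    using B complex_Re_le_cmod[of "ys (T p - T v)"] by linarith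
  have "cmod (ys (T p - T v)) \<le> cmod (G (T p - T v)) + cmod (G (T p - T v) - ys (T p - T v))"
    using norm_triangle_ineq4[of "G (T p - T v)" "G (T p - T v) - ys (T p - T v)"] by simp
  moreover have "cmod (G (T p - T v) - ys (T p - T v)) \<le> \<epsilon>' * s"
  proof -
    have "cmod (G (T p - T v) - ys (T p - T v)) \<le> \<epsilon>' * norm (T p - T v)" by (rule Gys)
    also have "\<dots> \<le> \<epsilon>' * s" using Tl[of p v] npv eps by (intro mult_left_mono) auto
    finally show ?thesis .
  qed
  ultimately have D: "cmod (G (T p - T v)) \<ge> s * (1 - 6 * \<epsilon> - 2 * \<epsilon>')" using C by (simp add: algebra_simps)
  define F where "F y = (complex_of_real s * cnj \<beta>1) * G y" for y
  have cK: "complex_of_real s * cnj \<beta>1 \<in> K"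
    using ss_K(2)[OF ss ss_K(4)[OF ss] ss_K(3)[OF ss ss_unimod_K[OF b1]]] .
  have Fd: "F \<in> dual K sm" unfolding F_def using dual_cmult[OF ss Gd cK] .
  have blF: "bounded_linear F" using dualD(1)[OF Fd] .
  have blG: "bounded_linear G" using dualD(1)[OF Gd] .
  have cb: "cmod (complex_of_real s * cnj \<beta>1) = s" using s0 unimod_cmod[OF b1] by (simp add: norm_mult)
  have Fnorm: "cmod (F y) = s * cmod (G y)" for y unfolding F_def using cb by (simp add: norm_mult)
  have Gb: "cmod (G y) \<le> norm y" for y using onorm[OF blG, of y] Go by simp
  have "onorm F \<le> s"
    by (rule onorm_bound) (use s0 Fnorm Gb in \<open>auto intro: mult_left_mono\<close>)
  moreover have "s \<le> onorm F" using le_onorm[OF blF, of z0] Fnorm Gz0 z0n by simp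
  ultimately have Fo: "onorm F = s" by simp
  have b11: "\<beta>1 * cnj \<beta>1 = 1"
    using complex_norm_square[of \<beta>1] unimod_cmod[OF b1] by simp
  have Fpv: "F (p - v) = complex_of_real (s * s)"
  proof -
    have "F (p - v) = s *\<^sub>R F (sm \<beta>1 z0)" unfolding pv using linear_scale[OF bounded_linear.linear[OF blF]] .
    also have "F (sm \<beta>1 z0) = \<beta>1 * F z0" using dualD(3)[OF Fd ss_unimod_K[OF b1]] .
    also have "F z0 = complex_of_real s * cnj \<beta>1" unfolding F_def using Gz0 by simp
    finally have "F (p - v) = s *\<^sub>R (\<beta>1 * (complex_of_real s * cnj \<beta>1))" .
    also have "\<dots> = complex_of_real (s * s) * (\<beta>1 * cnj \<beta>1)" by (simp add: scaleR_conv_of_real algebra_simps)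
    finally show ?thesis using b11 by simp
  qed
  have FD: "F \<in> Dset K sm (p - v)"
    unfolding Dset_def using Fd Fpv Fo npv by (simp add: power2_eq_square)
  have pne: "p \<noteq> v" using npv s0 by auto
  have "cmod (F (T p - T v)) / (norm (p - v))^2 = cmod (G (T p - T v)) / s"
    using Fnorm npv s0 by (simp add: power2_eq_square)
  also have "\<dots> \<ge> 1 - 6 * \<epsilon> - 2 * \<epsilon>'" using D s0 by (simp add: le_divide_eq algebra_simps)
  finally show ?thesis using pne FD by blast
qed



lemma omega_approx:
  fixes T :: "'a::banach \<Rightarrow> 'a"
  assumes ss: "scalar_setting K sm" and jl: "join_lush K sm"
    and Tl: "\<forall>a b. norm (T a - T b) \<le> norm (a - b)"
    and Tap: "\<forall>\<epsilon>>0. \<exists>u v. u \<noteq> v \<and> norm (T u - T v) > (1 - \<epsilon>) * norm (u - v)"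
    and d: "0 < \<delta>"
  shows "\<exists>p q F. p \<noteq> q \<and> F \<in> Dset K sm (p - q) \<and> cmod (F (T p - T q)) / (norm (p - q))^2 > 1 - \<delta>"
proof -
  define e' where "e' = \<delta> / 4"
  have e': "e' > 0" using d e'_def by simp
  obtain \<eta> where eta: "\<eta> > 0" and bp: "\<And>h (x::'a). h \<in> dual K sm \<Longrightarrow> (\<forall>z. cmod (h z) \<le> norm z) \<Longrightarrow> norm x \<le> 1 \<Longrightarrow> Re (h x) > 1 - \<eta> \<Longrightarrow>
     (\<exists>G z0. G \<in> dual K sm \<and> onorm G = 1 \<and> G z0 = 1 \<and> norm z0 = 1 \<and> norm (z0 - x) \<le> e' \<and> (\<forall>y. cmod (G y - h y) \<le> e' * norm y))"
    using bpb_dual[OF ss e'] by blast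
  define \<epsilon> where "\<epsilon> = min (min \<eta> (\<delta>/48)) (1/4)"
  have ep: "\<epsilon> > 0" using eta d \<epsilon>_def by simp
  have ep1: "\<epsilon> \<le> \<eta>" unfolding \<epsilon>_def by (meson min.cobounded1 order_trans)
  have ep2: "\<epsilon> \<le> \<delta>/48" unfolding \<epsilon>_def by (meson min.cobounded1 min.cobounded2 order_trans)
  have ep3: "\<epsilon> \<le> 1/4" unfolding \<epsilon>_def by (rule min.cobounded2)
  obtain u v where uv: "u \<noteq> v" and big0: "norm (T u - T v) > (1 - \<epsilon>) * norm (u - v)" using Tap ep by blast
  define r where "r = norm (u - v)"
  have r: "r > 0" using uv r_def by simp
  define \<rho> where "\<rho> = norm (T u - T v)"
  have rho: "\<rho> > (1 - \<epsilon>) * r" using big0 r_def \<rho>_def by simp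
  have rho0: "\<rho> > 0"
  proof -
    have "(1 - \<epsilon>) * r > 0" using ep3 r by simp
    then show ?thesis using rho by simp
  qed
  define x where "x = (1/r) *\<^sub>R (u - v)"
  define y where "y = (1/\<rho>) *\<^sub>R (T u - T v)"
  have nx: "norm x = 1" using r r_def x_def by simp
  have ny: "norm y = 1" using rho0 \<rho>_def y_def by simp
  obtain ys where ysd: "ys \<in> dual K sm" and yso: "onorm ys = 1" and ysl: "y \<in> slice ys \<epsilon>"
    and rest: "\<exists>x1\<in>slice ys \<epsilon>. \<exists>x2\<in>slice ys \<epsilon>. \<exists>t\<in>{0..1::real}. \<exists>a1\<in>unimod K. \<exists>a2\<in>unimod K.
              norm (x - (t *\<^sub>R sm a1 x1 + (1 - t) *\<^sub>R sm a2 x2)) < \<epsilon>"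
    using jl nx ny ep unfolding join_lush_def by blast
  have blys: "bounded_linear ys" using dualD(1)[OF ysd] .
  have ysb: "cmod (ys z) \<le> norm z" for z using onorm[OF blys, of z] yso by simp
  have "\<exists>\<mu> b1 b2 z1 z2. 1/2 \<le> \<mu> \<and> \<mu> \<le> 1 \<and> b1 \<in> unimod K \<and> b2 \<in> unimod K \<and> z1 \<in> slice ys \<epsilon> \<and> z2 \<in> slice ys \<epsilon>
      \<and> norm (x - (\<mu> *\<^sub>R sm b1 z1 + (1 - \<mu>) *\<^sub>R sm b2 z2)) < \<epsilon>"
  proof -
    obtain x1 x2 t a1 a2 where h: "x1 \<in> slice ys \<epsilon>" "x2 \<in> slice ys \<epsilon>" "t \<in> {0..1::real}" "a1 \<in> unimod K" "a2 \<in> unimod K"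
      "norm (x - (t *\<^sub>R sm a1 x1 + (1 - t) *\<^sub>R sm a2 x2)) < \<epsilon>" using rest by blast
    show ?thesis
    proof (cases "t \<ge> 1/2")
      case True then show ?thesis using h by (intro exI[of _ t] exI[of _ a1] exI[of _ a2] exI[of _ x1] exI[of _ x2]) auto
    next
      case False
      have eq: "(1 - t) *\<^sub>R sm a2 x2 + (1 - (1 - t)) *\<^sub>R sm a1 x1 = t *\<^sub>R sm a1 x1 + (1 - t) *\<^sub>R sm a2 x2" by simp
      have c2: "norm (x - ((1 - t) *\<^sub>R sm a2 x2 + (1 - (1 - t)) *\<^sub>R sm a1 x1)) < \<epsilon>" unfolding eq by (rule h(6))
      have m: "1/2 \<le> 1 - t" "1 - t \<le> 1" using False h(3) by auto
      show ?thesis using m h(1,2,4,5) c2 by blast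
    qed
  qed
  then obtain \<mu> b1 b2 z1 z2 where mu: "1/2 \<le> \<mu>" "\<mu> \<le> 1" and b: "b1 \<in> unimod K" "b2 \<in> unimod K"
    and z: "z1 \<in> slice ys \<epsilon>" "z2 \<in> slice ys \<epsilon>" and comb: "norm (x - (\<mu> *\<^sub>R sm b1 z1 + (1 - \<mu>) *\<^sub>R sm b2 z2)) < \<epsilon>"
    by blast
  have z1n: "norm z1 \<le> 1" and z2n: "norm z2 \<le> 1" and z1re: "Re (ys z1) > 1 - \<epsilon>" using z unfolding slice_def by auto
  have "Re (ys z1) > 1 - \<eta>" using z1re ep1 by simp
  then obtain G z0 where Gd: "G \<in> dual K sm" and Go: "onorm G = 1" and Gz0: "G z0 = 1" and z0n: "norm z0 = 1"
    and z0z1: "norm (z0 - z1) \<le> e'" and Gys: "\<forall>y. cmod (G y - ys y) \<le> e' * norm y"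
    using bp[OF ysd _ z1n] ysb by blast
  have big: "Re (ys (T u - T v)) \<ge> r * (1 - 2*\<epsilon>)"
  proof -
    have "T u - T v = \<rho> *\<^sub>R y" using rho0 y_def by simp
    then have "ys (T u - T v) = \<rho> *\<^sub>R ys y" using linear_scale[OF bounded_linear.linear[OF blys]] by simp
    then have e: "Re (ys (T u - T v)) = \<rho> * Re (ys y)" by simp
    have ry: "Re (ys y) > 1 - \<epsilon>" using ysl unfolding slice_def by simp
    have "r * (1 - 2*\<epsilon>) \<le> ((1 - \<epsilon>) * r) * (1 - \<epsilon>)"
    proof -
      have "((1 - \<epsilon>) * r) * (1 - \<epsilon>) = r * (1 - 2*\<epsilon>) + r * \<epsilon>^2" by (simp add: algebra_simps power2_eq_square)
      moreover have "r * \<epsilon>^2 \<ge> 0" using r by simp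
      ultimately show ?thesis by linarith
    qed
    also have "\<dots> \<le> \<rho> * (1 - \<epsilon>)" using rho ep3 by (intro mult_right_mono) auto
    also have "\<dots> \<le> \<rho> * Re (ys y)" using ry rho0 by (intro mult_left_mono) auto
    finally show ?thesis using e by simp
  qed
  have comb': "norm ((1/r) *\<^sub>R (u - v) - (\<mu> *\<^sub>R sm b1 z1 + (1-\<mu>) *\<^sub>R sm b2 z2)) < \<epsilon>"
    using comb x_def by simp
  obtain p q F where pq: "p \<noteq> q" "F \<in> Dset K sm (p - q)"
    and ratio: "cmod (F (T p - T q)) / (norm (p - q))^2 \<ge> 1 - 6*\<epsilon> - 2*e'"
  proof -
    have Tl': "\<And>a b. norm (T a - T b) \<le> norm (a - b)" using Tl by blast
    have Gys': "\<And>y. cmod (G y - ys y) \<le> e' * norm y" using Gys by blast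
    have ep0: "\<epsilon> \<ge> 0" "e' \<ge> 0" using ep e' by auto
    show ?thesis using core[OF ss Tl' ysd ysb r r_def[symmetric] big mu b z1n z2n comb' Gd Go Gz0 z0n z0z1 Gys' ep0] that by blast
  qed
  have "1 - 6*\<epsilon> - 2*e' > 1 - \<delta>" using ep2 e'_def d by simp
  then show ?thesis using pq ratio by (intro exI[of _ p] exI[of _ q] exI[of _ F]) auto
qed

lemma omega_one:
  fixes T :: "'a::banach \<Rightarrow> 'a"
  assumes ss: "scalar_setting K sm" and nz: "\<exists>x::'a. x \<noteq> 0" and jl: "join_lush K sm"
    and T: "T \<in> Lip0" and ln: "lip_norm T = 1"
  shows "omega K sm T = 1"
proof -
  note lf = lip_facts[OF T nz ln]
  define W where "W = {cmod (f (T x - T y)) / (norm (x - y))\<^sup>2 | x y f. x \<noteq> y \<and> f \<in> Dset K sm (x - y)}"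
  have le1: "w \<le> 1" if wW: "w \<in> W" for w
  proof -
    obtain x y f where h: "x \<noteq> y" "f \<in> Dset K sm (x - y)" "w = cmod (f (T x - T y)) / (norm (x - y))\<^sup>2"
      using wW W_def by blast
    have fd: "f \<in> dual K sm" and fo: "onorm f * norm (x - y) = (norm (x - y))\<^sup>2" using h(2) unfolding Dset_def by auto
    have np: "norm (x - y) > 0" using h(1) by simp
    have of: "onorm f = norm (x - y)" using fo np by (simp add: power2_eq_square)
    have "cmod (f (T x - T y)) \<le> onorm f * norm (T x - T y)" using onorm[OF dualD(1)[OF fd]] .
    also have "\<dots> \<le> norm (x - y) * norm (x - y)" unfolding of using lf(1) np by (intro mult_left_mono) auto
    finally show ?thesis using h(3) np by (simp add: power2_eq_square divide_le_eq)
  qed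
  have approx: "\<exists>w\<in>W. w > 1 - \<delta>" if dp: "\<delta> > 0" for \<delta>
  proof -
    obtain p q F where "p \<noteq> q" "F \<in> Dset K sm (p - q)" "cmod (F (T p - T q)) / (norm (p - q))^2 > 1 - \<delta>"
      using omega_approx[OF ss jl lf(1) lf(2) dp] by blast
    then show ?thesis unfolding W_def by blast
  qed
  have Wne: "W \<noteq> {}" using approx[of 1] by auto
  have bdd: "bdd_above W" by (rule bdd_aboveI[where M=1]) (rule le1)
  have "Sup W \<le> 1" using le1 Wne by (intro cSup_least) auto
  moreover have "Sup W \<ge> 1"
  proof (rule ccontr)
    assume "\<not> Sup W \<ge> 1"
    then obtain w where "w \<in> W" "w > 1 - (1 - Sup W)" using approx[of "1 - Sup W"] by auto
    then show False using cSup_upper[OF _ bdd, of w] by simp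
  qed
  ultimately have "Sup W = 1" by simp
  then show ?thesis unfolding omega_def W_def by simp
qed

theorem mainTheorem7:
  fixes K :: "complex set" and sm :: "complex \<Rightarrow> 'a::banach \<Rightarrow> 'a"
  assumes "scalar_setting K sm"
    and "\<exists>x::'a. x \<noteq> 0"
    and "join_lush K sm"
  shows "nL K sm = 1"
proof -
  define Om where "Om = {omega K sm T | T. T \<in> Lip0 \<and> lip_norm T = 1}"
  have sub: "Om \<subseteq> {1}" using omega_one[OF assms(1) assms(2) assms(3)] Om_def by auto
  have idL: "(\<lambda>x::'a. x) \<in> Lip0" unfolding Lip0_def
    by (auto intro!: exI[of _ 1] simp: lipschitz_on_def)
  have idn: "lip_norm (\<lambda>x::'a. x) = 1"
  proof -
    obtain x0 :: 'a where "x0 \<noteq> 0" using assms(2) by blast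
    then have "{norm (x - y) / norm (x - y) | x y :: 'a. x \<noteq> y} = {1}" by force
    then show ?thesis unfolding lip_norm_def by simp
  qed
  have "omega K sm (\<lambda>x. x) = 1" using omega_one[OF assms idL idn] .
  then have "1 \<in> Om" using Om_def idL idn by force
  then have "Om = {1}" using sub by blast
  then show ?thesis unfolding nL_def Om_def by simp
qed

end
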